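(* Consider the climate-coalition game with linear-quadratic utility and populations $P_1>P_2>\dots>P_N>0$ (all distinct), $N\ge 3$. Restrict attention to pure-strategy Nash equilibria of the participation stage in which the coalition is nonempty. Then in any such equilibrium the coalition has at most two members, and country 1 (the most populous) is always a member. More precisely: (i) if $2P_2<P_1$, the unique equilibrium coalition is $\{1\}$; (ii) if $2P_2=P_1$, the equilibrium coalitions are exactly $\{1\}$ and $\{1,2\}$; (iii) if $2P_2>P_1$, every equilibrium coalition has exactly two members and is of the form $\{1,j\}$ with $j\in\{2,3,\dots,l\}$, where $l$ is the largest index such that $P_l\ge\max\{P_1/2,\;2P_2-P_1\}$; conversely each such $\{1,j\}$ is an equilibrium coalition.
   Context: Climate-coalition game: $N$ countries with populations $P_i>0$. The per-capita utility in country $i$ is $u_i=\beta A-\frac{\gamma}{2}a_i^2$ with $\beta,\gamma>0$, where $a_i\in\mathbb{R}$ is country $i$'s per-capita abatement and $A=\sum_j P_ja_j$. Stage 1: each country simultaneously and non-cooperatively decides whether to join a coalition $S$ (a strategy is "join" or "stay out"). Stage 2: the members of $S$ jointly choose their per-capita abatements to maximize the coalition's total welfare $W_S=\sum_{i\in S}P_iu_i$ (no transfers), while each outsider chooses its per-capita abatement to maximize its own $u_i$. A participation profile is a Nash equilibrium if no country can strictly increase its per-capita utility (evaluated at the resulting stage-2 outcome) by unilaterally switching its participation decision. (A one-member coalition and an empty coalition induce the same abatements, which is why only nonempty coalitions are considered.) *)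

theory Defs
  imports Main Complex_Main
begin

text \<open>Countries are indexed by 1..N; populations P; abatement profile a (per capita).\<close>

definition total_abatement :: "nat \<Rightarrow> (nat \<Rightarrow> real) \<Rightarrow> (nat \<Rightarrow> real) \<Rightarrow> real" where
  "total_abatement N P a = (\<Sum>j\<in>{1..N}. P j * a j)"

definition util :: "nat \<Rightarrow> (nat \<Rightarrow> real) \<Rightarrow> real \<Rightarrow> real \<Rightarrow> nat \<Rightarrow> (nat \<Rightarrow> real) \<Rightarrow> real" where
  "util N P \<beta> \<gamma> i a = \<beta> * total_abatement N P a - \<gamma> / 2 * (a i)^2"

definition coalition_welfare :: "nat \<Rightarrow> (nat \<Rightarrow> real) \<Rightarrow> real \<Rightarrow> real \<Rightarrow> nat set \<Rightarrow> (nat \<Rightarrow> real) \<Rightarrow> real" where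
  "coalition_welfare N P \<beta> \<gamma> S a = (\<Sum>i\<in>S. P i * util N P \<beta> \<gamma> i a)"

definition stage2_outcome :: "nat \<Rightarrow> (nat \<Rightarrow> real) \<Rightarrow> real \<Rightarrow> real \<Rightarrow> nat set \<Rightarrow> (nat \<Rightarrow> real) \<Rightarrow> bool" where
  "stage2_outcome N P \<beta> \<gamma> S a \<longleftrightarrow>
     (\<forall>b. (\<forall>j. j \<notin> S \<longrightarrow> b j = a j) \<longrightarrow>
           coalition_welfare N P \<beta> \<gamma> S b \<le> coalition_welfare N P \<beta> \<gamma> S a) \<and>
     (\<forall>i\<in>{1..N} - S. \<forall>x. util N P \<beta> \<gamma> i (a(i := x)) \<le> util N P \<beta> \<gamma> i a)"

definition toggle :: "nat \<Rightarrow> nat set \<Rightarrow> nat set" where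
  "toggle i S = (if i \<in> S then S - {i} else insert i S)"

text \<open>Participation-stage Nash equilibrium: no country can strictly increase its per-capita
  utility (at the resulting stage-2 outcome) by unilaterally switching its decision.
  (The stage-2 outcome is unique; we quantify over all stage-2 outcomes.)\<close>
definition participation_NE :: "nat \<Rightarrow> (nat \<Rightarrow> real) \<Rightarrow> real \<Rightarrow> real \<Rightarrow> nat set \<Rightarrow> bool" where
  "participation_NE N P \<beta> \<gamma> S \<longleftrightarrow> S \<subseteq> {1..N} \<and>
     (\<forall>i\<in>{1..N}. \<forall>a a'. stage2_outcome N P \<beta> \<gamma> S a \<longrightarrow>
        stage2_outcome N P \<beta> \<gamma> (toggle i S) a' \<longrightarrow>
        util N P \<beta> \<gamma> i a' \<le> util N P \<beta> \<gamma> i a)"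

end

theory Submission imports Defs begin

definition PS :: "(nat \<Rightarrow> real) \<Rightarrow> nat set \<Rightarrow> real" where
  "PS P S = (\<Sum>i\<in>S. P i)"

definition aopt :: "(nat \<Rightarrow> real) \<Rightarrow> real \<Rightarrow> real \<Rightarrow> nat set \<Rightarrow> nat \<Rightarrow> real" where
  "aopt P \<beta> \<gamma> S = (\<lambda>k. if k \<in> S then \<beta> * PS P S / \<gamma> else \<beta> * P k / \<gamma>)"

lemma tot_upd:
  assumes "k \<in> {1..N}"
  shows "total_abatement N P (a(k:=x)) = total_abatement N P a + P k * (x - a k)"
proof -
  have "(\<Sum>j\<in>{1..N}. P j * (a(k:=x)) j) = (\<Sum>j\<in>{1..N}. P j * a j + (if j = k then P k * (x - a k) else 0))"
    by (rule sum.cong) (auto simp: algebra_simps)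
  also have "\<dots> = (\<Sum>j\<in>{1..N}. P j * a j) + P k * (x - a k)"
    using assms by (simp add: sum.distrib)
  finally show ?thesis by (simp add: total_abatement_def)
qed

lemma util_upd:
  assumes "k \<in> {1..N}"
  shows "util N P \<beta> \<gamma> i (a(k:=x)) = util N P \<beta> \<gamma> i a + \<beta> * P k * (x - a k)
     - (if i = k then \<gamma>/2 * (x^2 - (a k)^2) else 0)"
  unfolding util_def tot_upd[OF assms] by (auto simp: algebra_simps)

lemma uniq:
  assumes S: "S \<subseteq> {1..N}" and pos: "\<forall>i\<in>{1..N}. P i > 0" and g: "\<gamma> > 0"
    and o: "stage2_outcome N P \<beta> \<gamma> S a" and k: "k \<in> {1..N}"
  shows "a k = aopt P \<beta> \<gamma> S k"
proof (cases "k \<in> S")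
  case True
  define t where "t = (\<beta> * PS P S - \<gamma> * a k) / \<gamma>"
  define b where "b = a(k := a k + t)"
  have fin: "finite S" using S finite_subset by blast
  have "coalition_welfare N P \<beta> \<gamma> S b \<le> coalition_welfare N P \<beta> \<gamma> S a"
    using o True unfolding stage2_outcome_def b_def by auto
  moreover have "coalition_welfare N P \<beta> \<gamma> S b = (\<Sum>i\<in>S. P i * util N P \<beta> \<gamma> i a + P i * (\<beta> * P k * t)
     - (if i = k then P k * (\<gamma>/2 * ((a k + t)^2 - (a k)^2)) else 0))"
    unfolding coalition_welfare_def b_def
    by (rule sum.cong) (auto simp: util_upd[OF k] algebra_simps)
  moreover have "\<dots> = coalition_welfare N P \<beta> \<gamma> S a + PS P S * (\<beta> * P k * t) - P k * (\<gamma>/2 * ((a k + t)^2 - (a k)^2))"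
    using True fin by (simp add: sum.distrib sum_subtractf coalition_welfare_def PS_def sum_distrib_right)
  ultimately have "PS P S * (\<beta> * P k * t) - P k * (\<gamma>/2 * ((a k + t)^2 - (a k)^2)) \<le> 0" by linarith
  moreover have "\<beta> * PS P S = \<gamma> * t + \<gamma> * a k" using g unfolding t_def by (simp add: field_simps)
  moreover have "PS P S * (\<beta> * P k * t) = P k * t * (\<beta> * PS P S)" by (simp add: algebra_simps)
  ultimately have "P k * t * (\<gamma> * t + \<gamma> * a k) - P k * (\<gamma>/2 * ((a k + t)^2 - (a k)^2)) \<le> 0" by simp
  hence "P k * (\<gamma>/2 * t^2) \<le> 0"
    by (simp add: power2_eq_square algebra_simps)
  moreover have "P k > 0" using pos k by auto
  ultimately have "t = 0" using g
    by (smt (verit) mult_pos_pos power2_less_0 zero_less_power2 divide_pos_pos)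
  then show ?thesis using True g unfolding t_def aopt_def by (simp add: field_simps)
next
  case False
  define x where "x = \<beta> * P k / \<gamma>"
  have "util N P \<beta> \<gamma> k (a(k:=x)) \<le> util N P \<beta> \<gamma> k a"
    using o False k unfolding stage2_outcome_def by auto
  hence "\<beta> * P k * (x - a k) - \<gamma>/2 * (x^2 - (a k)^2) \<le> 0"
    by (simp add: util_upd[OF k])
  moreover have "\<beta> * P k = \<gamma> * x" using g unfolding x_def by simp
  ultimately have "\<gamma>/2 * (x - a k)^2 \<le> 0" by (simp add: power2_eq_square algebra_simps)
  hence "x = a k" using g
    by (smt (verit) divide_pos_pos mult_pos_pos zero_less_power2)
  then show ?thesis using False unfolding aopt_def x_def by simp
qed

lemma exist:
  assumes S: "S \<subseteq> {1..N}" and pos: "\<forall>i\<in>{1..N}. P i > 0" and g: "\<gamma> > 0"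
  shows "stage2_outcome N P \<beta> \<gamma> S (aopt P \<beta> \<gamma> S)"
  unfolding stage2_outcome_def
proof (intro conjI allI impI ballI)
  fix b assume bo: "\<forall>j. j \<notin> S \<longrightarrow> b j = aopt P \<beta> \<gamma> S j"
  define a0 where "a0 = aopt P \<beta> \<gamma> S"
  define c where "c = \<beta> * PS P S / \<gamma>"
  have fin: "finite S" using S finite_subset by blast
  have a0S: "\<And>i. i \<in> S \<Longrightarrow> a0 i = c" unfolding a0_def aopt_def c_def by simp
  define D where "D = (\<Sum>j\<in>S. P j * (b j - c))"
  have "total_abatement N P b - total_abatement N P a0 = (\<Sum>j\<in>{1..N}. P j * (b j - a0 j))"
    unfolding total_abatement_def by (simp add: sum_subtractf algebra_simps)
  also have "\<dots> = (\<Sum>j\<in>{1..N}. if j \<in> S then P j * (b j - c) else 0)"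
    by (rule sum.cong) (use bo a0S in \<open>auto simp: a0_def\<close>)
  also have "\<dots> = (\<Sum>j\<in>{1..N} \<inter> S. P j * (b j - c))"
    by (simp add: sum.inter_restrict)
  also have "{1..N} \<inter> S = S" using S by blast
  finally have AD: "total_abatement N P b = total_abatement N P a0 + D" unfolding D_def by simp
  have "coalition_welfare N P \<beta> \<gamma> S b - coalition_welfare N P \<beta> \<gamma> S a0
     = (\<Sum>i\<in>S. P i * (\<beta> * D - \<gamma>/2 * ((b i)^2 - c^2)))"
    unfolding coalition_welfare_def sum_subtractf[symmetric]
    by (rule sum.cong) (auto simp: util_def AD a0S algebra_simps)
  also have "\<dots> = \<beta> * PS P S * D - (\<Sum>i\<in>S. P i * (\<gamma>/2 * ((b i)^2 - c^2)))"
  proof -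
    have "(\<Sum>i\<in>S. P i * (\<beta> * D - \<gamma>/2 * ((b i)^2 - c^2)))
        = (\<Sum>i\<in>S. P i * (\<beta> * D)) - (\<Sum>i\<in>S. P i * (\<gamma>/2 * ((b i)^2 - c^2)))"
      unfolding sum_subtractf[symmetric] by (rule sum.cong) (auto simp: right_diff_distrib)
    also have "(\<Sum>i\<in>S. P i * (\<beta> * D)) = \<beta> * PS P S * D"
      unfolding PS_def sum_distrib_right[symmetric] by simp
    finally show ?thesis .
  qed
  also have "\<beta> * PS P S = \<gamma> * c" using g unfolding c_def by simp
  also have "\<gamma> * c * D = (\<Sum>i\<in>S. P i * (\<gamma> * c * (b i - c)))"
    unfolding D_def sum_distrib_left by (rule sum.cong) (auto simp: algebra_simps)
  also have "(\<Sum>i\<in>S. P i * (\<gamma> * c * (b i - c))) - (\<Sum>i\<in>S. P i * (\<gamma>/2 * ((b i)^2 - c^2)))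
      = (\<Sum>i\<in>S. P i * (- (\<gamma>/2) * (b i - c)^2))"
    unfolding sum_subtractf[symmetric]
    by (rule sum.cong) (auto simp: power2_eq_square algebra_simps)
  finally have eq: "coalition_welfare N P \<beta> \<gamma> S b - coalition_welfare N P \<beta> \<gamma> S a0
     = (\<Sum>i\<in>S. P i * (- (\<gamma>/2) * (b i - c)^2))" .
  have "(\<Sum>i\<in>S. P i * (- (\<gamma>/2) * (b i - c)^2)) \<le> 0"
  proof (rule sum_nonpos)
    fix i assume "i \<in> S"
    hence "P i > 0" using pos S by auto
    thus "P i * (- (\<gamma>/2) * (b i - c)^2) \<le> 0" using g
      by (simp add: mult_nonneg_nonpos)
  qed
  with eq show "coalition_welfare N P \<beta> \<gamma> S b \<le> coalition_welfare N P \<beta> \<gamma> S (aopt P \<beta> \<gamma> S)"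
    unfolding a0_def by linarith
next
  fix i x assume i: "i \<in> {1..N} - S"
  define a0 where "a0 = aopt P \<beta> \<gamma> S"
  have ai: "a0 i = \<beta> * P i / \<gamma>" using i unfolding a0_def aopt_def by simp
  have dd: "util N P \<beta> \<gamma> i (a0(i:=x)) - util N P \<beta> \<gamma> i a0 = - (\<gamma>/2) * (x - a0 i)^2"
  proof -
    have "util N P \<beta> \<gamma> i (a0(i:=x)) - util N P \<beta> \<gamma> i a0 = \<beta> * P i * (x - a0 i) - \<gamma>/2 * (x^2 - (a0 i)^2)"
      using i by (simp add: util_upd)
    moreover have "\<beta> * P i = \<gamma> * a0 i" using g ai by simp
    ultimately show ?thesis by (simp add: power2_eq_square algebra_simps)
  qed
  thus "util N P \<beta> \<gamma> i ((aopt P \<beta> \<gamma> S)(i:=x)) \<le> util N P \<beta> \<gamma> i (aopt P \<beta> \<gamma> S)"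
  proof -
    have "0 \<le> (\<gamma>/2) * (x - a0 i)^2" using g by simp
    with \<open>util N P \<beta> \<gamma> i (a0(i:=x)) - util N P \<beta> \<gamma> i a0 = - (\<gamma>/2) * (x - a0 i)^2\<close>
    show ?thesis unfolding a0_def by linarith
  qed
qed


definition val :: "nat \<Rightarrow> (nat \<Rightarrow> real) \<Rightarrow> nat set \<Rightarrow> nat \<Rightarrow> real" where
  "val N P S i = PS P S ^ 2 + (\<Sum>j\<in>{1..N}-S. P j ^ 2) - (if i \<in> S then PS P S ^ 2 else P i ^ 2) / 2"

lemma util_opt:
  assumes S: "S \<subseteq> {1..N}" and g: "\<gamma> > 0"
  shows "util N P \<beta> \<gamma> i (aopt P \<beta> \<gamma> S) = \<beta>^2/\<gamma> * val N P S i"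
proof -
  have fin: "finite S" using S finite_subset by blast
  have "total_abatement N P (aopt P \<beta> \<gamma> S) = (\<Sum>j\<in>{1..N}-S. P j * aopt P \<beta> \<gamma> S j) + (\<Sum>j\<in>S. P j * aopt P \<beta> \<gamma> S j)"
    unfolding total_abatement_def using S by (simp add: sum.subset_diff)
  also have "(\<Sum>j\<in>S. P j * aopt P \<beta> \<gamma> S j) = (\<Sum>j\<in>S. P j * (\<beta> * PS P S / \<gamma>))"
    by (rule sum.cong) (auto simp: aopt_def)
  also have "\<dots> = \<beta> / \<gamma> * PS P S ^ 2"
    unfolding sum_distrib_right[symmetric] PS_def by (simp add: power2_eq_square)
  also have "(\<Sum>j\<in>{1..N}-S. P j * aopt P \<beta> \<gamma> S j) = (\<Sum>j\<in>{1..N}-S. \<beta> / \<gamma> * P j ^ 2)"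
    by (rule sum.cong) (auto simp: aopt_def power2_eq_square)
  also have "\<dots> = \<beta> / \<gamma> * (\<Sum>j\<in>{1..N}-S. P j ^ 2)"
    by (simp add: sum_distrib_left)
  finally have A: "total_abatement N P (aopt P \<beta> \<gamma> S) = \<beta> / \<gamma> * (PS P S ^ 2 + (\<Sum>j\<in>{1..N}-S. P j ^ 2))"
    by (simp add: algebra_simps)
  show ?thesis using g unfolding util_def A val_def
    by (simp add: aopt_def power2_eq_square field_simps)
qed

lemma util_cong:
  assumes "\<forall>k\<in>{1..N}. a k = b k" and "i \<in> {1..N}"
  shows "util N P \<beta> \<gamma> i a = util N P \<beta> \<gamma> i b"
proof -
  have "total_abatement N P a = total_abatement N P b"
    unfolding total_abatement_def using assms(1) by (intro sum.cong) auto
  thus ?thesis unfolding util_def using assms by simp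
qed

lemma toggle_sub: "S \<subseteq> {1..N} \<Longrightarrow> i \<in> {1..N} \<Longrightarrow> toggle i S \<subseteq> {1..N}"
  unfolding toggle_def by auto

lemma NE_val:
  assumes pos: "\<forall>i\<in>{1..N}. P i > 0" and g: "\<gamma> > 0" and b: "\<beta> > 0"
  shows "participation_NE N P \<beta> \<gamma> S \<longleftrightarrow> S \<subseteq> {1..N} \<and> (\<forall>i\<in>{1..N}. val N P (toggle i S) i \<le> val N P S i)"
proof
  assume ne: "participation_NE N P \<beta> \<gamma> S"
  hence S: "S \<subseteq> {1..N}" unfolding participation_NE_def by blast
  have c: "\<beta>^2/\<gamma> > 0" using b g by simp
  show "S \<subseteq> {1..N} \<and> (\<forall>i\<in>{1..N}. val N P (toggle i S) i \<le> val N P S i)"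
  proof (intro conjI ballI S)
    fix i assume i: "i \<in> {1..N}"
    have "util N P \<beta> \<gamma> i (aopt P \<beta> \<gamma> (toggle i S)) \<le> util N P \<beta> \<gamma> i (aopt P \<beta> \<gamma> S)"
      using ne i exist[OF S pos g] exist[OF toggle_sub[OF S i] pos g] unfolding participation_NE_def by blast
    hence "\<beta>^2/\<gamma> * val N P (toggle i S) i \<le> \<beta>^2/\<gamma> * val N P S i"
      by (simp add: util_opt[OF S g] util_opt[OF toggle_sub[OF S i] g])
    thus "val N P (toggle i S) i \<le> val N P S i" using c mult_le_cancel_left_pos by blast
  qed
next
  assume h: "S \<subseteq> {1..N} \<and> (\<forall>i\<in>{1..N}. val N P (toggle i S) i \<le> val N P S i)"
  hence S: "S \<subseteq> {1..N}" by blast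
  have c: "\<beta>^2/\<gamma> > 0" using b g by simp
  show "participation_NE N P \<beta> \<gamma> S" unfolding participation_NE_def
  proof (intro conjI S ballI allI impI)
    fix i a a' assume i: "i \<in> {1..N}" and o: "stage2_outcome N P \<beta> \<gamma> S a"
      and o': "stage2_outcome N P \<beta> \<gamma> (toggle i S) a'"
    have "util N P \<beta> \<gamma> i a = util N P \<beta> \<gamma> i (aopt P \<beta> \<gamma> S)"
      using uniq[OF S pos g o] i by (intro util_cong) auto
    moreover have "util N P \<beta> \<gamma> i a' = util N P \<beta> \<gamma> i (aopt P \<beta> \<gamma> (toggle i S))"
      using uniq[OF toggle_sub[OF S i] pos g o'] i by (intro util_cong) auto
    moreover have "\<beta>^2/\<gamma> * val N P (toggle i S) i \<le> \<beta>^2/\<gamma> * val N P S i"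
      using h i c mult_le_cancel_left_pos by blast
    ultimately show "util N P \<beta> \<gamma> i a' \<le> util N P \<beta> \<gamma> i a"
      by (simp add: util_opt[OF S g] util_opt[OF toggle_sub[OF S i] g])
  qed
qed


lemma PS_remove: "finite S \<Longrightarrow> i \<in> S \<Longrightarrow> PS P (S - {i}) = PS P S - P i"
  unfolding PS_def by (simp add: sum_diff1)

lemma PS_insert: "finite S \<Longrightarrow> i \<notin> S \<Longrightarrow> PS P (insert i S) = PS P S + P i"
  unfolding PS_def by simp

lemma val_in:
  assumes S: "S \<subseteq> {1..N}" and i: "i \<in> S"
  shows "val N P (toggle i S) i \<le> val N P S i \<longleftrightarrow> (PS P S - P i)^2 \<le> 2 * (PS P S - P i) * P i"
proof -
  have fin: "finite S" using S finite_subset by blast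
  have iN: "i \<in> {1..N}" using S i by blast
  have e1: "{1..N} - (S - {i}) = insert i ({1..N} - S)" using iN by blast
  have s: "(\<Sum>j\<in>{1..N} - (S - {i}). P j ^ 2) = P i ^ 2 + (\<Sum>j\<in>{1..N}-S. P j ^ 2)"
    unfolding e1 using i by (subst sum.insert) auto
  have v1: "val N P (toggle i S) i = (PS P S - P i)^2 + (P i ^ 2 + (\<Sum>j\<in>{1..N}-S. P j ^ 2)) - P i ^ 2 / 2"
    unfolding val_def toggle_def s[symmetric] using i fin by (simp add: PS_remove)
  have v2: "val N P S i = PS P S ^ 2 + (\<Sum>j\<in>{1..N}-S. P j ^ 2) - PS P S ^ 2 / 2"
    unfolding val_def using i by simp
  show ?thesis unfolding v1 v2 by (simp add: power2_eq_square algebra_simps, linarith)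
qed

lemma val_out:
  assumes S: "S \<subseteq> {1..N}" and i: "i \<in> {1..N}" "i \<notin> S"
  shows "val N P (toggle i S) i \<le> val N P S i \<longleftrightarrow> 2 * PS P S * P i \<le> PS P S ^ 2"
proof -
  have fin: "finite S" using S finite_subset by blast
  have e1: "{1..N} - insert i S = ({1..N} - S) - {i}" by blast
  have s: "(\<Sum>j\<in>{1..N} - insert i S. P j ^ 2) = (\<Sum>j\<in>{1..N} - S. P j ^ 2) - P i ^ 2"
    unfolding e1 using i by (simp add: sum_diff1)
  have v1: "val N P (toggle i S) i = (PS P S + P i)^2 + ((\<Sum>j\<in>{1..N}-S. P j ^ 2) - P i ^ 2) - (PS P S + P i) ^ 2 / 2"
    unfolding val_def toggle_def s[symmetric] using i fin by (simp add: PS_insert)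
  have v2: "val N P S i = PS P S ^ 2 + (\<Sum>j\<in>{1..N}-S. P j ^ 2) - P i ^ 2 / 2"
    unfolding val_def using i by simp
  show ?thesis unfolding v1 v2 by (simp add: power2_eq_square algebra_simps)
qed

definition NEc :: "nat \<Rightarrow> (nat \<Rightarrow> real) \<Rightarrow> nat set \<Rightarrow> bool" where
  "NEc N P S \<longleftrightarrow> S \<subseteq> {1..N} \<and> (\<forall>i\<in>S. (PS P S - P i)^2 \<le> 2 * (PS P S - P i) * P i)
     \<and> (\<forall>i\<in>{1..N} - S. 2 * PS P S * P i \<le> PS P S ^ 2)"

lemma NE_NEc:
  assumes pos: "\<forall>i\<in>{1..N}. P i > 0" and g: "\<gamma> > 0" and b: "\<beta> > 0"
  shows "participation_NE N P \<beta> \<gamma> S \<longleftrightarrow> NEc N P S"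
proof -
  have "S \<subseteq> {1..N} \<Longrightarrow> (\<forall>i\<in>{1..N}. val N P (toggle i S) i \<le> val N P S i) \<longleftrightarrow>
     (\<forall>i\<in>S. (PS P S - P i)^2 \<le> 2 * (PS P S - P i) * P i)
     \<and> (\<forall>i\<in>{1..N} - S. 2 * PS P S * P i \<le> PS P S ^ 2)"
    using val_in[of S N _ P] val_out[of S N _ P] by blast
  thus ?thesis unfolding NE_val[OF pos g b] NEc_def by blast
qed


lemma PS_pos:
  assumes pos: "\<forall>i\<in>{1..N}. P i > 0" and S: "S \<subseteq> {1..N}" "S \<noteq> {}"
  shows "PS P S > 0"
proof -
  have "finite S" using S finite_subset by blast
  thus ?thesis unfolding PS_def using S pos by (intro sum_pos) auto
qed

lemma card_le2:
  assumes pos: "\<forall>i\<in>{1..N}. P i > 0"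
    and mono: "\<And>i j. 1 \<le> i \<Longrightarrow> i < j \<Longrightarrow> j \<le> N \<Longrightarrow> P j < P i"
    and ne: "NEc N P S"
  shows "card S \<le> 2"
proof (rule ccontr)
  assume c3: "\<not> card S \<le> 2"
  have S: "S \<subseteq> {1..N}" using ne unfolding NEc_def by blast
  have fin: "finite S" using S finite_subset by blast
  have Sne: "S \<noteq> {}" using c3 by auto
  define m where "m = Max S"
  have mS: "m \<in> S" unfolding m_def using fin Sne by simp
  have cm: "card (S - {m}) \<ge> 2" using c3 mS fin by (simp add: card_Diff_singleton)
  hence "S - {m} \<noteq> {}" by (metis card.empty not_numeral_le_zero)
  then obtain a where a: "a \<in> S - {m}" by blast
  have "card (S - {m} - {a}) \<ge> 1" using cm a fin by (simp add: card_Diff_singleton)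
  hence "S - {m} - {a} \<noteq> {}" by (metis card.empty not_one_le_zero)
  then obtain b where b: "b \<in> S - {m} - {a}" by blast
  have am: "a < m" using a fin unfolding m_def
    by (metis DiffD1 DiffD2 Max_ge insertI1 order_le_neq_trans)
  have bm: "b < m" using b fin unfolding m_def
    by (metis DiffD1 DiffD2 Max_ge insertI1 order_le_neq_trans)
  have a1: "1 \<le> a" and b1: "1 \<le> b" and mN: "m \<le> N" using a b mS S by auto
  have Pa: "P m < P a" using mono[OF a1 am mN] .
  have Pb: "P m < P b" using mono[OF b1 bm mN] .
  have Pm: "P m > 0" using pos mS S by auto
  have nn: "\<And>x. x \<in> S \<Longrightarrow> 0 \<le> P x" using pos S by (meson less_imp_le subsetD)
  have "P a + P b = (\<Sum>i\<in>{a,b}. P i)" using b by simp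
  also have "\<dots> \<le> (\<Sum>i\<in>S - {m}. P i)"
    using a b fin nn by (intro sum_mono2) auto
  also have "\<dots> = PS P S - P m" unfolding PS_def using fin mS by (simp add: sum_diff1)
  finally have Q: "PS P S - P m > 2 * P m" using Pa Pb by linarith
  have "(PS P S - P m)^2 \<le> 2 * (PS P S - P m) * P m" using ne mS unfolding NEc_def by blast
  hence "(PS P S - P m) * (PS P S - P m) \<le> (PS P S - P m) * (2 * P m)"
    by (simp add: power2_eq_square algebra_simps)
  hence "PS P S - P m \<le> 2 * P m" using Q Pm by (simp add: mult_le_cancel_left_pos)
  thus False using Q by linarith
qed

lemma one_in:
  assumes pos: "\<forall>i\<in>{1..N}. P i > 0"
    and mono: "\<And>i j. 1 \<le> i \<Longrightarrow> i < j \<Longrightarrow> j \<le> N \<Longrightarrow> P j < P i"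
    and ne: "NEc N P S" and Sne: "S \<noteq> {}"
  shows "1 \<in> S"
proof (rule ccontr)
  assume n1: "1 \<notin> S"
  have S: "S \<subseteq> {1..N}" using ne unfolding NEc_def by blast
  have fin: "finite S" using S finite_subset by blast
  have N1: "1 \<le> N" using S Sne by auto
  have PSp: "PS P S > 0" using PS_pos[OF pos S Sne] .
  have "2 * PS P S * P 1 \<le> PS P S ^ 2" using ne n1 N1 unfolding NEc_def by auto
  hence "PS P S * (2 * P 1) \<le> PS P S * PS P S" by (simp add: power2_eq_square algebra_simps)
  hence h: "2 * P 1 \<le> PS P S" using PSp by (simp add: mult_le_cancel_left_pos)
  have lt: "\<And>x. x \<in> S \<Longrightarrow> P x < P 1"
  proof -
    fix x assume x: "x \<in> S"
    have "x \<in> {1..N}" using S x by blast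
    hence "1 \<le> x" "x \<le> N" by auto
    moreover have "x \<noteq> 1" using n1 x by blast
    ultimately have "1 < x" "x \<le> N" by auto
    thus "P x < P 1" using mono[of 1 x] by simp
  qed
  have "card S \<le> 2" using card_le2[OF pos mono ne] .
  moreover have "card S \<noteq> 0" using fin Sne by simp
  ultimately have "card S = 1 \<or> card S = 2" by linarith
  thus False
  proof
    assume "card S = 1"
    then obtain a where "S = {a}" by (auto simp: card_1_singleton_iff)
    moreover have "P a > 0" using pos S \<open>S = {a}\<close> by auto
    ultimately show False using h lt[of a] unfolding PS_def by auto
  next
    assume "card S = 2"
    then obtain a b where ab: "S = {a, b}" "a \<noteq> b" by (auto simp: card_2_iff)
    hence "PS P S = P a + P b" unfolding PS_def by simp
    thus False using h lt[of a] lt[of b] ab by auto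
  qed
qed

lemma c1:
  assumes pos: "\<forall>i\<in>{1..N}. P i > 0"
    and mono: "\<And>i j. 1 \<le> i \<Longrightarrow> i < j \<Longrightarrow> j \<le> N \<Longrightarrow> P j < P i"
    and N2: "N \<ge> 2"
  shows "NEc N P {1} \<longleftrightarrow> 2 * P 2 \<le> P 1"
proof -
  have P1: "P 1 > 0" using pos N2 by auto
  have eq: "\<And>i. (2 * P 1 * P i \<le> P 1 ^ 2) \<longleftrightarrow> 2 * P i \<le> P 1"
    using P1 by (simp add: power2_eq_square mult.commute mult.left_commute mult_le_cancel_left_pos)
  have "NEc N P {1} \<longleftrightarrow> (\<forall>i\<in>{1..N} - {1}. 2 * P i \<le> P 1)"
    unfolding NEc_def PS_def using N2 eq by auto
  also have "\<dots> \<longleftrightarrow> 2 * P 2 \<le> P 1"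
  proof
    assume "\<forall>i\<in>{1..N} - {1}. 2 * P i \<le> P 1" thus "2 * P 2 \<le> P 1" using N2 by auto
  next
    assume h: "2 * P 2 \<le> P 1"
    show "\<forall>i\<in>{1..N} - {1}. 2 * P i \<le> P 1"
    proof
      fix i assume i: "i \<in> {1..N} - {1}"
      have "P i \<le> P 2"
        using i mono[of 2 i] by (cases "i = 2") auto
      thus "2 * P i \<le> P 1" using h by linarith
    qed
  qed
  finally show ?thesis .
qed

lemma c2:
  assumes pos: "\<forall>i\<in>{1..N}. P i > 0"
    and mono: "\<And>i j. 1 \<le> i \<Longrightarrow> i < j \<Longrightarrow> j \<le> N \<Longrightarrow> P j < P i"
    and j: "j \<in> {2..N}"
  shows "NEc N P {1, j} \<longleftrightarrow> P 1 \<le> 2 * P j \<and> (j = 2 \<or> 2 * P 2 \<le> P 1 + P j)"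
proof -
  have P1: "P 1 > 0" and Pj: "P j > 0" using pos j by auto
  have Pj1: "P j < P 1" using mono[of 1 j] j by auto
  have ps: "PS P {1, j} = P 1 + P j" unfolding PS_def using j by simp
  have in1: "(PS P {1,j} - P 1)^2 \<le> 2 * (PS P {1,j} - P 1) * P 1"
    unfolding ps using Pj Pj1 P1 by (simp add: power2_eq_square mult_le_cancel_left_pos)
  have inj: "(PS P {1,j} - P j)^2 \<le> 2 * (PS P {1,j} - P j) * P j \<longleftrightarrow> P 1 \<le> 2 * P j"
    unfolding ps using P1 by (simp add: power2_eq_square mult.commute mult.left_commute mult_le_cancel_left_pos)
  have ex: "\<And>i. 2 * PS P {1,j} * P i \<le> PS P {1,j} ^ 2 \<longleftrightarrow> 2 * P i \<le> P 1 + P j"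
  proof -
    fix i
    have q: "0 < PS P {1,j}" using P1 Pj ps by simp
    have "2 * PS P {1,j} * P i \<le> PS P {1,j} ^ 2 \<longleftrightarrow> PS P {1,j} * (2 * P i) \<le> PS P {1,j} * PS P {1,j}"
      by (simp add: power2_eq_square algebra_simps)
    also have "\<dots> \<longleftrightarrow> 2 * P i \<le> PS P {1,j}" using q by (rule mult_le_cancel_left_pos)
    finally show "2 * PS P {1,j} * P i \<le> PS P {1,j} ^ 2 \<longleftrightarrow> 2 * P i \<le> P 1 + P j" unfolding ps .
  qed
  have "NEc N P {1, j} \<longleftrightarrow> P 1 \<le> 2 * P j \<and> (\<forall>i\<in>{1..N} - {1,j}. 2 * P i \<le> P 1 + P j)"
    unfolding NEc_def using j in1 inj ex by auto
  also have "(\<forall>i\<in>{1..N} - {1,j}. 2 * P i \<le> P 1 + P j) \<longleftrightarrow> (j = 2 \<or> 2 * P 2 \<le> P 1 + P j)"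
  proof
    assume h: "\<forall>i\<in>{1..N} - {1,j}. 2 * P i \<le> P 1 + P j"
    show "j = 2 \<or> 2 * P 2 \<le> P 1 + P j"
    proof (cases "j = 2")
      case False thus ?thesis using h j by auto
    qed simp
  next
    assume h: "j = 2 \<or> 2 * P 2 \<le> P 1 + P j"
    show "\<forall>i\<in>{1..N} - {1,j}. 2 * P i \<le> P 1 + P j"
    proof
      fix i assume i: "i \<in> {1..N} - {1,j}"
      show "2 * P i \<le> P 1 + P j"
      proof (cases "j = 2")
        case True
        hence "P i < P j" using i mono[of j i] j by auto
        thus ?thesis using Pj1 by linarith
      next
        case False
        hence "P i \<le> P 2" using i mono[of 2 i] by (cases "i = 2") auto
        thus ?thesis using h False by linarith
      qed
    qed
  qed
  finally show ?thesis .
qed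

theorem proposition4:
  fixes N :: nat and P :: "nat \<Rightarrow> real" and \<beta> \<gamma> :: real
  assumes "N \<ge> 3" and "\<beta> > 0" and "\<gamma> > 0"
    and "P N > 0"
    and "\<And>i j. 1 \<le> i \<Longrightarrow> i < j \<Longrightarrow> j \<le> N \<Longrightarrow> P j < P i"
  shows "(\<forall>S. S \<noteq> {} \<and> participation_NE N P \<beta> \<gamma> S \<longrightarrow> card S \<le> 2 \<and> 1 \<in> S)
    \<and> (2 * P 2 < P 1 \<longrightarrow>
         (\<forall>S. S \<noteq> {} \<longrightarrow> (participation_NE N P \<beta> \<gamma> S \<longleftrightarrow> S = {1})))
    \<and> (2 * P 2 = P 1 \<longrightarrow>
         (\<forall>S. S \<noteq> {} \<longrightarrow> (participation_NE N P \<beta> \<gamma> S \<longleftrightarrow> S = {1} \<or> S = {1, 2})))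
    \<and> (2 * P 2 > P 1 \<longrightarrow>
         (let l = (GREATEST l. l \<in> {1..N} \<and> P l \<ge> max (P 1 / 2) (2 * P 2 - P 1)) in
          \<forall>S. S \<noteq> {} \<longrightarrow> (participation_NE N P \<beta> \<gamma> S \<longleftrightarrow> (\<exists>j\<in>{2..l}. S = {1, j}))))"
proof -
  note mono = assms(5)
  have pos: "\<forall>i\<in>{1..N}. P i > 0"
  proof
    fix i assume i: "i \<in> {1..N}"
    show "P i > 0"
    proof (cases "i = N")
      case False thus ?thesis using i mono[of i N] assms(4) by auto
    qed (use assms(4) in simp)
  qed
  have NE: "\<And>S. participation_NE N P \<beta> \<gamma> S \<longleftrightarrow> NEc N P S"
    using NE_NEc[OF pos assms(3) assms(2)] .
  have A1: "\<And>S. S \<noteq> {} \<Longrightarrow> NEc N P S \<Longrightarrow> card S \<le> 2 \<and> 1 \<in> S"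
    using card_le2[OF pos mono] one_in[OF pos mono] by blast
  have shape: "\<And>S. S \<noteq> {} \<Longrightarrow> NEc N P S \<Longrightarrow> S = {1} \<or> (\<exists>j\<in>{2..N}. S = {1, j})"
  proof -
    fix S assume Sne: "S \<noteq> {}" and ne: "NEc N P S"
    have S: "S \<subseteq> {1..N}" using ne unfolding NEc_def by blast
    have fin: "finite S" using S finite_subset by blast
    have c: "card S \<le> 2" and one: "1 \<in> S" using A1[OF Sne ne] by auto
    have c1: "card (S - {1}) \<le> 1" using c one fin by (simp add: card_Diff_singleton)
    show "S = {1} \<or> (\<exists>j\<in>{2..N}. S = {1, j})"
    proof (cases "S - {1} = {}")
      case True thus ?thesis using one by blast
    next
      case False
      then obtain j where j: "j \<in> S - {1}" by blast
      have f1: "finite (S - {1})" using fin by simp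
      have "\<forall>a\<in>S - {1}. \<forall>b\<in>S - {1}. a = b"
        using c1 card_le_Suc0_iff_eq[OF f1] by simp
      hence "S - {1} = {j}" using j by blast
      hence "S = {1, j}" using one by blast
      moreover have "j \<in> {2..N}" using j S by auto
      ultimately show ?thesis by blast
    qed
  qed
  have N2: "N \<ge> 2" using assms(1) by simp
  have C1: "NEc N P {1} \<longleftrightarrow> 2 * P 2 \<le> P 1" using c1[OF pos mono N2] .
  have C2: "\<And>j. j \<in> {2..N} \<Longrightarrow> NEc N P {1, j} \<longleftrightarrow> P 1 \<le> 2 * P j \<and> (j = 2 \<or> 2 * P 2 \<le> P 1 + P j)"
    using c2[OF pos mono] by blast
  have P21: "P 2 < P 1" using mono[of 1 2] N2 by simp
  have Pj2: "\<And>j. j \<in> {2..N} \<Longrightarrow> j \<noteq> 2 \<Longrightarrow> P j < P 2" using mono[of 2] by auto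
  have Pj2': "\<And>j. j \<in> {2..N} \<Longrightarrow> P j \<le> P 2" using Pj2 by (metis order.refl less_imp_le)
  show ?thesis
  proof (intro conjI impI allI)
    fix S assume "S \<noteq> {} \<and> participation_NE N P \<beta> \<gamma> S"
    thus "card S \<le> 2" using A1 NE by blast
  next
    fix S assume "S \<noteq> {} \<and> participation_NE N P \<beta> \<gamma> S"
    thus "1 \<in> S" using A1 NE by blast
  next
    fix S :: "nat set" assume h: "2 * P 2 < P 1" and Sne: "S \<noteq> {}"
    show "participation_NE N P \<beta> \<gamma> S \<longleftrightarrow> S = {1}"
    proof
      assume "participation_NE N P \<beta> \<gamma> S"
      hence ne: "NEc N P S" using NE by blast
      show "S = {1}"
      proof (rule ccontr)
        assume "S \<noteq> {1}"
        then obtain j where j: "j \<in> {2..N}" "S = {1, j}" using shape[OF Sne ne] by blast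
        hence "P 1 \<le> 2 * P j" using C2 ne by blast
        thus False using Pj2'[OF j(1)] h by linarith
      qed
    next
      assume "S = {1}" thus "participation_NE N P \<beta> \<gamma> S" using NE C1 h by simp
    qed
  next
    fix S :: "nat set" assume h: "2 * P 2 = P 1" and Sne: "S \<noteq> {}"
    show "participation_NE N P \<beta> \<gamma> S \<longleftrightarrow> S = {1} \<or> S = {1, 2}"
    proof
      assume "participation_NE N P \<beta> \<gamma> S"
      hence ne: "NEc N P S" using NE by blast
      show "S = {1} \<or> S = {1, 2}"
      proof (rule ccontr)
        assume nn: "\<not> (S = {1} \<or> S = {1, 2})"
        then obtain j where j: "j \<in> {2..N}" "S = {1, j}" using shape[OF Sne ne] by blast
        hence "P 1 \<le> 2 * P j" using C2 ne by blast
        moreover have "j \<noteq> 2" using j nn by blast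
        ultimately show False using Pj2[OF j(1)] h by linarith
      qed
    next
      assume "S = {1} \<or> S = {1, 2}"
      thus "participation_NE N P \<beta> \<gamma> S" using NE C1 C2[of 2] h N2 by auto
    qed
  next
    assume h: "2 * P 2 > P 1"
    define M where "M = max (P 1 / 2) (2 * P 2 - P 1)"
    define l where "l = (GREATEST l. l \<in> {1..N} \<and> P l \<ge> M)"
    have ex2: "2 \<in> {1..N} \<and> P 2 \<ge> M" using h N2 P21 unfolding M_def by auto
    have lprop: "l \<in> {1..N} \<and> P l \<ge> M"
      unfolding l_def by (rule GreatestI_nat[where P="\<lambda>l. l \<in> {1..N} \<and> P l \<ge> M" and k=2 and b=N]) (use ex2 in auto)
    have lmax: "\<And>j. j \<in> {1..N} \<and> P j \<ge> M \<Longrightarrow> j \<le> l"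
      unfolding l_def by (rule Greatest_le_nat[where P="\<lambda>l. l \<in> {1..N} \<and> P l \<ge> M" and b=N]) auto
    have key: "\<And>j. j \<in> {2..N} \<Longrightarrow> j \<le> l \<longleftrightarrow> P j \<ge> M"
    proof
      fix j assume j: "j \<in> {2..N}" "j \<le> l"
      have "P l \<le> P j" using mono[of j l] j lprop by (cases "j = l") auto
      thus "P j \<ge> M" using lprop by linarith
    next
      fix j assume j: "j \<in> {2..N}" "P j \<ge> M"
      thus "j \<le> l" using lmax by auto
    qed
    have C2': "\<And>j. j \<in> {2..N} \<Longrightarrow> NEc N P {1, j} \<longleftrightarrow> P j \<ge> M"
    proof -
      fix j assume j: "j \<in> {2..N}"
      show "NEc N P {1, j} \<longleftrightarrow> P j \<ge> M"
        unfolding C2[OF j] M_def using P21 by (cases "j = 2") auto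
    qed
    show "let l = (GREATEST l. l \<in> {1..N} \<and> P l \<ge> max (P 1 / 2) (2 * P 2 - P 1)) in
          \<forall>S. S \<noteq> {} \<longrightarrow> (participation_NE N P \<beta> \<gamma> S \<longleftrightarrow> (\<exists>j\<in>{2..l}. S = {1, j}))"
      unfolding Let_def M_def[symmetric] l_def[symmetric]
    proof (intro allI impI)
      fix S :: "nat set" assume Sne: "S \<noteq> {}"
      have lN: "l \<le> N" using lprop by auto
      show "participation_NE N P \<beta> \<gamma> S \<longleftrightarrow> (\<exists>j\<in>{2..l}. S = {1, j})"
      proof
        assume "participation_NE N P \<beta> \<gamma> S"
        hence ne: "NEc N P S" using NE by blast
        have "S \<noteq> {1}" using ne C1 h by auto
        then obtain j where j: "j \<in> {2..N}" "S = {1, j}" using shape[OF Sne ne] by blast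
        hence "P j \<ge> M" using C2' ne by blast
        hence "j \<le> l" using key[OF j(1)] by blast
        thus "\<exists>j\<in>{2..l}. S = {1, j}" using j by auto
      next
        assume "\<exists>j\<in>{2..l}. S = {1, j}"
        then obtain j where j: "j \<in> {2..l}" "S = {1, j}" by blast
        have jN: "j \<in> {2..N}" using j lN by auto
        have "P j \<ge> M" using key[OF jN] j by auto
        thus "participation_NE N P \<beta> \<gamma> S" using NE C2'[OF jN] j by simp
      qed
    qed
  qed
qed

end
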